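(* Let $(M,\star)$ be a Banach algebra and $e\in M$ a right identity (i.e. $\mu\star e=\mu$ for all $\mu\in M$). Then $Z_t((e\star M)'')=Z_t(M'')\cap(e\star M)''$.
   Context: Left Arens product on $M''$: for $h\in M'$, $\mu,\nu\in M$, $\mathbf m,\mathbf n\in M''$, $\langle h\cdot\mu,\nu\rangle=\langle h,\mu\star\nu\rangle$, $\langle\mathbf n\odot h,\mu\rangle=\langle\mathbf n,h\cdot\mu\rangle$, $\langle\mathbf m\square\mathbf n,h\rangle=\langle\mathbf m,\mathbf n\odot h\rangle$. (Left) topological centre: $Z_t(M'')=\{\mathbf m\in M'':\ \mathbf n\mapsto\mathbf m\square\mathbf n\text{ is weak}^*\text{-continuous on }M''\}$. $e\star M=\{e\star\mu:\mu\in M\}$ is a closed subalgebra; its bidual $(e\star M)''$ is identified with its weak$^*$-closure in $M''$, on which the Arens product of $M''$ restricts to that of $(e\star M)''$, and $Z_t((e\star M)'')$ is the topological centre of the Banach algebra $e\star M$. *)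

theory Defs
  imports "HOL-Analysis.Analysis"
begin

text \<open>Dual M' = bounded linear functionals 'a \<Rightarrow>L real; bidual M'' = ('a \<Rightarrow>L real) \<Rightarrow>L real.\<close>

definition dual_act :: "('a::real_normed_algebra \<Rightarrow>\<^sub>L real) \<Rightarrow> 'a \<Rightarrow> ('a \<Rightarrow>\<^sub>L real)" where
  "dual_act h \<mu> = Blinfun (\<lambda>\<nu>. blinfun_apply h (\<mu> * \<nu>))"

definition bidual_act :: "(('a::real_normed_algebra \<Rightarrow>\<^sub>L real) \<Rightarrow>\<^sub>L real) \<Rightarrow> ('a \<Rightarrow>\<^sub>L real) \<Rightarrow> ('a \<Rightarrow>\<^sub>L real)" where
  "bidual_act n h = Blinfun (\<lambda>\<mu>. blinfun_apply n (dual_act h \<mu>))"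

definition arens :: "(('a::real_normed_algebra \<Rightarrow>\<^sub>L real) \<Rightarrow>\<^sub>L real) \<Rightarrow> (('a \<Rightarrow>\<^sub>L real) \<Rightarrow>\<^sub>L real) \<Rightarrow> (('a \<Rightarrow>\<^sub>L real) \<Rightarrow>\<^sub>L real)" where
  "arens m n = Blinfun (\<lambda>h. blinfun_apply m (bidual_act n h))"

definition wstar :: "(('a::real_normed_vector \<Rightarrow>\<^sub>L real) \<Rightarrow>\<^sub>L real) topology" where
  "wstar = topology_generated_by {{n. blinfun_apply n h \<in> U} | h U. open U}"

definition kappa :: "'a::real_normed_vector \<Rightarrow> (('a \<Rightarrow>\<^sub>L real) \<Rightarrow>\<^sub>L real)" where
  "kappa \<mu> = Blinfun (\<lambda>h. blinfun_apply h \<mu>)"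

text \<open>Bidual of the closed subalgebra e*M, identified with the weak*-closure of its canonical
  image in M''.\<close>
definition sub_bidual :: "'a::real_normed_algebra \<Rightarrow> (('a \<Rightarrow>\<^sub>L real) \<Rightarrow>\<^sub>L real) set" where
  "sub_bidual e = wstar closure_of (kappa ` ((\<lambda>\<mu>. e * \<mu>) ` UNIV))"

text \<open>Topological centre of a weak*-closed subalgebra S of M'' (with Arens product restricted to S
  and the relative weak* topology).  topcentre UNIV is Z_t(M'').\<close>
definition topcentre :: "(('a::real_normed_algebra \<Rightarrow>\<^sub>L real) \<Rightarrow>\<^sub>L real) set \<Rightarrow> (('a \<Rightarrow>\<^sub>L real) \<Rightarrow>\<^sub>L real) set" where
  "topcentre S = {m \<in> S. continuous_map (subtopology wstar S) (subtopology wstar S) (\<lambda>n. arens m n)}"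

end

theory Submission
  imports Defs
begin

lemmas [simp] = plus_blinfun.rep_eq scaleR_blinfun.rep_eq minus_blinfun.rep_eq

lemma da_apply[simp]: "blinfun_apply (dual_act h \<mu>) \<nu> = blinfun_apply h (\<mu> * \<nu>)"
  unfolding dual_act_def
  by (subst bounded_linear_Blinfun_apply)
     (auto intro: bounded_linear_compose[OF blinfun.bounded_linear_right bounded_linear_mult_right])

lemma da_norm: "norm (dual_act h \<mu>) \<le> norm h * norm \<mu>"
proof (rule norm_blinfun_bound)
  show "0 \<le> norm h * norm \<mu>" by simp
  fix x
  have "norm (blinfun_apply h (\<mu> * x)) \<le> norm h * norm (\<mu> * x)" by (rule norm_blinfun)
  also have "\<dots> \<le> norm h * (norm \<mu> * norm x)" by (simp add: mult_left_mono norm_mult_ineq)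
  finally show "norm (blinfun_apply (dual_act h \<mu>) x) \<le> norm h * norm \<mu> * norm x"
    by (simp add: mult.assoc)
qed

lemma bl_da: "bounded_linear (dual_act h)"
proof (rule bounded_linear_intro[where K="norm h"])
  show "dual_act h (x + y) = dual_act h x + dual_act h y" for x y
    by (rule blinfun_eqI) (simp add: distrib_right blinfun.add_right)
  show "dual_act h (r *\<^sub>R x) = r *\<^sub>R dual_act h x" for r x
    by (rule blinfun_eqI) (simp add: blinfun.scaleR_right)
  show "norm (dual_act h x) \<le> norm x * norm h" for x
    using da_norm[of h x] by (simp add: mult.commute)
qed

lemma bda_apply[simp]: "blinfun_apply (bidual_act n h) \<mu> = blinfun_apply n (dual_act h \<mu>)"
  unfolding bidual_act_def
  by (subst bounded_linear_Blinfun_apply)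
     (auto intro: bounded_linear_compose[OF blinfun.bounded_linear_right bl_da])

lemma bda_norm: "norm (bidual_act n h) \<le> norm n * norm h"
proof (rule norm_blinfun_bound)
  show "0 \<le> norm n * norm h" by simp
  fix x
  have "norm (blinfun_apply n (dual_act h x)) \<le> norm n * norm (dual_act h x)" by (rule norm_blinfun)
  also have "\<dots> \<le> norm n * (norm h * norm x)" by (simp add: mult_left_mono da_norm)
  finally show "norm (blinfun_apply (bidual_act n h) x) \<le> norm n * norm h * norm x"
    by (simp add: mult.assoc)
qed

lemma bl_bda: "bounded_linear (bidual_act n)"
proof (rule bounded_linear_intro[where K="norm n"])
  show "bidual_act n (x + y) = bidual_act n x + bidual_act n y" for x y
  proof (rule blinfun_eqI)
    fix i
    have "dual_act (x + y) i = dual_act x i + dual_act y i"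
      by (rule blinfun_eqI) (simp add: blinfun.add_left)
    then show "blinfun_apply (bidual_act n (x + y)) i = blinfun_apply (bidual_act n x + bidual_act n y) i"
      by (simp add: blinfun.add_right)
  qed
  show "bidual_act n (r *\<^sub>R x) = r *\<^sub>R bidual_act n x" for r x
  proof (rule blinfun_eqI)
    fix i
    have "dual_act (r *\<^sub>R x) i = r *\<^sub>R dual_act x i"
      by (rule blinfun_eqI) simp
    then show "blinfun_apply (bidual_act n (r *\<^sub>R x)) i = blinfun_apply (r *\<^sub>R bidual_act n x) i"
      by (simp add: blinfun.scaleR_right)
  qed
  show "norm (bidual_act n x) \<le> norm x * norm n" for x
    using bda_norm[of n x] by (simp add: mult.commute)
qed

lemma arens_apply[simp]: "blinfun_apply (arens m n) h = blinfun_apply m (bidual_act n h)"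
  unfolding arens_def
  by (subst bounded_linear_Blinfun_apply)
     (auto intro: bounded_linear_compose[OF blinfun.bounded_linear_right bl_bda])

lemma kappa_apply[simp]: "blinfun_apply (kappa \<mu>) h = blinfun_apply h \<mu>"
  unfolding kappa_def
  by (subst bounded_linear_Blinfun_apply) auto

lemma arens_kappa: "arens (kappa \<mu>) (kappa \<nu>) = kappa (\<mu> * \<nu>)"
  by (rule blinfun_eqI) simp

lemma arens_P:
  assumes "\<forall>\<mu>::'a::real_normed_algebra. \<mu> * e = \<mu>"
  shows "arens m (arens (kappa e) n) = arens m n"
proof -
  have 1: "dual_act (dual_act h \<mu>) e = dual_act h \<mu>" for h \<mu>
    by (rule blinfun_eqI) (simp add: mult.assoc[symmetric] assms)
  have "bidual_act (arens (kappa e) n) h = bidual_act n h" for h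
    by (rule blinfun_eqI) (simp add: 1)
  then show ?thesis by (intro blinfun_eqI) simp
qed

lemma van_span:
  fixes F :: "('a::real_normed_vector \<Rightarrow>\<^sub>L real) set"
  assumes "finite F"
  shows "(\<forall>k. (\<forall>f\<in>F. blinfun_apply f k = 0) \<longrightarrow> blinfun_apply g k = 0) \<Longrightarrow> g \<in> span F"
  using assms
proof (induction F arbitrary: g rule: finite_induct)
  case empty
  then have "g = 0" by (intro blinfun_eqI) simp
  then show ?case by simp
next
  case (insert f F)
  show ?case
  proof (cases "\<forall>k. (\<forall>f'\<in>F. blinfun_apply f' k = 0) \<longrightarrow> blinfun_apply f k = 0")
    case True
    then have "g \<in> span F" using insert.prems by (intro insert.IH) auto
    then show ?thesis by (meson span_mono subset_insertI subsetD)
  next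
    case False
    then obtain k0 where k0: "\<forall>f'\<in>F. blinfun_apply f' k0 = 0" "blinfun_apply f k0 \<noteq> 0" by blast
    define g' where "g' = g - (blinfun_apply g k0 / blinfun_apply f k0) *\<^sub>R f"
    have "\<forall>k. (\<forall>f'\<in>F. blinfun_apply f' k = 0) \<longrightarrow> blinfun_apply g' k = 0"
    proof (intro allI impI)
      fix x assume x: "\<forall>f'\<in>F. blinfun_apply f' x = 0"
      define y where "y = x - (blinfun_apply f x / blinfun_apply f k0) *\<^sub>R k0"
      have "\<forall>f'\<in>insert f F. blinfun_apply f' y = 0"
        using x k0 by (auto simp: y_def blinfun.diff_right blinfun.scaleR_right)
      then have "blinfun_apply g y = 0" using insert.prems by blast
      then have "blinfun_apply g x = (blinfun_apply f x / blinfun_apply f k0) * blinfun_apply g k0"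
        by (simp add: y_def blinfun.diff_right blinfun.scaleR_right)
      then show "blinfun_apply g' x = 0"
        by (simp add: g'_def blinfun.diff_left)
    qed
    then have "g' \<in> span F" by (rule insert.IH)
    then have "g' \<in> span (insert f F)" by (meson span_mono subset_insertI subsetD)
    moreover have "(blinfun_apply g k0 / blinfun_apply f k0) *\<^sub>R f \<in> span (insert f F)"
      by (simp add: span_base span_scale)
    ultimately have "g' + (blinfun_apply g k0 / blinfun_apply f k0) *\<^sub>R f \<in> span (insert f F)"
      by (rule span_add)
    then show ?thesis by (simp add: g'_def)
  qed
qed

lemma helly:
  fixes F :: "('a::real_normed_vector \<Rightarrow>\<^sub>L real) set"
  assumes "finite F"
  shows "\<exists>\<mu>. \<forall>g\<in>F. blinfun_apply g \<mu> = blinfun_apply n g"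
  using assms
proof (induction F rule: finite_induct)
  case empty
  then show ?case by simp
next
  case (insert g F)
  then obtain \<mu>0 where mu0: "\<forall>f\<in>F. blinfun_apply f \<mu>0 = blinfun_apply n f" by blast
  show ?case
  proof (cases "\<exists>k. (\<forall>f\<in>F. blinfun_apply f k = 0) \<and> blinfun_apply g k \<noteq> 0")
    case True
    then obtain k where k: "\<forall>f\<in>F. blinfun_apply f k = 0" "blinfun_apply g k \<noteq> 0" by blast
    define \<mu> where "\<mu> = \<mu>0 + ((blinfun_apply n g - blinfun_apply g \<mu>0) / blinfun_apply g k) *\<^sub>R k"
    have "\<forall>f\<in>insert g F. blinfun_apply f \<mu> = blinfun_apply n f"
      using mu0 k by (auto simp: \<mu>_def blinfun.add_right blinfun.scaleR_right)
    then show ?thesis by blast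
  next
    case False
    then have "g \<in> span F" using van_span[OF insert.hyps(1)] by blast
    then have "blinfun_apply g \<mu>0 = blinfun_apply n g"
    proof (induction rule: span_induct_alt)
      case base
      then show ?case by (simp add: blinfun.zero_right)
    next
      case (step c x y)
      then show ?case using mu0
        by (simp add: blinfun.add_left blinfun.add_right blinfun.scaleR_right)
    qed
    then show ?thesis using mu0 by auto
  qed
qed

lemma US: "\<Union>{{n. blinfun_apply n h \<in> U} | h U. open U} = (UNIV :: (('a::real_normed_vector \<Rightarrow>\<^sub>L real) \<Rightarrow>\<^sub>L real) set)"
proof (rule set_eqI, rule iffI)
  fix x :: "('a \<Rightarrow>\<^sub>L real) \<Rightarrow>\<^sub>L real"
  have 1: "{n. blinfun_apply n 0 \<in> UNIV} \<in> {{n. blinfun_apply n h \<in> U} | h U. open U}"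
    by (rule CollectI, rule exI[of _ 0], rule exI[of _ UNIV]) simp
  have 2: "x \<in> {n. blinfun_apply n 0 \<in> UNIV}" by simp
  show "x \<in> \<Union>{{n. blinfun_apply n h \<in> U} | h U. open U}"
    by (rule UnionI[OF 1 2])
qed simp

lemma wstar_topspace[simp]: "topspace wstar = UNIV"
  unfolding wstar_def topology_generated_by_topspace by (rule US)

lemma wstar_cont:
  fixes f :: "(('a::real_normed_vector \<Rightarrow>\<^sub>L real) \<Rightarrow>\<^sub>L real) \<Rightarrow> (('a \<Rightarrow>\<^sub>L real) \<Rightarrow>\<^sub>L real)"
  assumes "\<And>h. \<exists>g. \<forall>n. blinfun_apply (f n) h = blinfun_apply n g"
  shows "continuous_map wstar wstar f"
proof -
  let ?S = "{{n. blinfun_apply n h \<in> U} | h U. open U} :: (('a::real_normed_vector \<Rightarrow>\<^sub>L real) \<Rightarrow>\<^sub>L real) set set"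
  have "continuous_map wstar (topology_generated_by ?S) f"
  proof (rule continuous_on_generated_topo)
    fix U assume "U \<in> ?S"
    then obtain h V where U: "U = {n. blinfun_apply n h \<in> V}" "open V" by blast
    obtain g where g: "\<forall>n. blinfun_apply (f n) h = blinfun_apply n g" using assms by blast
    have eq: "f -` U \<inter> topspace wstar = {n. blinfun_apply n g \<in> V}" using U g by auto
    have "{n. blinfun_apply n g \<in> V} \<in> ?S"
      by (rule CollectI, rule exI[of _ g], rule exI[of _ V]) (simp add: U(2))
    then have "openin wstar {n. blinfun_apply n g \<in> V}"
      unfolding wstar_def by (rule topology_generated_by_Basis)
    then show "openin wstar (f -` U \<inter> topspace wstar)"
      by (simp only: eq)
  next
    show "f ` topspace wstar \<subseteq> \<Union> ?S"
      by (simp only: US) simp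
  qed
  then show ?thesis unfolding wstar_def .
qed

lemma wstar_nbhd:
  assumes "openin wstar T" "x \<in> T"
  shows "\<exists>F \<epsilon>. finite F \<and> \<epsilon> > 0 \<and>
     {n. \<forall>h\<in>F. \<bar>blinfun_apply n h - blinfun_apply x h\<bar> < \<epsilon>} \<subseteq> T"
proof -
  have "generate_topology_on {{n. blinfun_apply n h \<in> U} | h U. open U} T"
    using assms(1) unfolding wstar_def by (rule openin_topology_generated_by)
  then show ?thesis using assms(2)
  proof (induction arbitrary: x rule: generate_topology_on.induct)
    case Empty
    then show ?case by simp
  next
    case (Int a b)
    obtain F1 e1 where 1: "finite F1" "e1 > 0"
      "{n. \<forall>h\<in>F1. \<bar>blinfun_apply n h - blinfun_apply x h\<bar> < e1} \<subseteq> a"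
      using Int.IH(1)[of x] Int.prems by blast
    obtain F2 e2 where 2: "finite F2" "e2 > 0"
      "{n. \<forall>h\<in>F2. \<bar>blinfun_apply n h - blinfun_apply x h\<bar> < e2} \<subseteq> b"
      using Int.IH(2)[of x] Int.prems by blast
    have "{n. \<forall>h\<in>F1 \<union> F2. \<bar>blinfun_apply n h - blinfun_apply x h\<bar> < min e1 e2} \<subseteq> a \<inter> b"
    proof
      fix n assume n: "n \<in> {n. \<forall>h\<in>F1 \<union> F2. \<bar>blinfun_apply n h - blinfun_apply x h\<bar> < min e1 e2}"
      have "n \<in> {n. \<forall>h\<in>F1. \<bar>blinfun_apply n h - blinfun_apply x h\<bar> < e1}"
        using n by simp
      moreover have "n \<in> {n. \<forall>h\<in>F2. \<bar>blinfun_apply n h - blinfun_apply x h\<bar> < e2}"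
        using n by simp
      ultimately show "n \<in> a \<inter> b" using 1(3) 2(3) by (meson IntI subsetD)
    qed
    moreover have "finite (F1 \<union> F2)" "min e1 e2 > 0" using 1 2 by auto
    ultimately show ?case by blast
  next
    case (UN K)
    then obtain k where k: "k \<in> K" "x \<in> k" by blast
    obtain F \<epsilon> where F: "finite F" "\<epsilon> > 0"
      "{n. \<forall>h\<in>F. \<bar>blinfun_apply n h - blinfun_apply x h\<bar> < \<epsilon>} \<subseteq> k"
      using UN.IH[OF k] by blast
    have "{n. \<forall>h\<in>F. \<bar>blinfun_apply n h - blinfun_apply x h\<bar> < \<epsilon>} \<subseteq> \<Union>K"
      using F(3) k(1) by (meson Union_upper subset_trans)
    then show ?case using F(1,2) by blast
  next
    case (Basis s)
    then obtain h U where s: "s = {n. blinfun_apply n h \<in> U}" "open U" by blast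
    then have "blinfun_apply x h \<in> U" using Basis.prems by simp
    then obtain \<epsilon> where e: "\<epsilon> > 0" "ball (blinfun_apply x h) \<epsilon> \<subseteq> U"
      using s(2) open_contains_ball by blast
    have "{n. \<forall>h'\<in>{h}. \<bar>blinfun_apply n h' - blinfun_apply x h'\<bar> < \<epsilon>} \<subseteq> s"
    proof
      fix n assume "n \<in> {n. \<forall>h'\<in>{h}. \<bar>blinfun_apply n h' - blinfun_apply x h'\<bar> < \<epsilon>}"
      then have "blinfun_apply n h \<in> ball (blinfun_apply x h) \<epsilon>"
        by (simp add: dist_real_def abs_minus_commute)
      then show "n \<in> s" using e(2) s(1) by blast
    qed
    then show ?case using e(1) by blast
  qed
qed

lemma P_in:
  "arens (kappa e) n \<in> sub_bidual (e::'a::real_normed_algebra)"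
  unfolding sub_bidual_def in_closure_of
proof (intro conjI allI impI)
  show "arens (kappa e) n \<in> topspace wstar" by simp
  fix T assume "arens (kappa e) n \<in> T \<and> openin wstar T"
  then obtain F \<epsilon> where F: "finite F" "\<epsilon> > 0"
    "{m. \<forall>h\<in>F. \<bar>blinfun_apply m h - blinfun_apply (arens (kappa e) n) h\<bar> < \<epsilon>} \<subseteq> T"
    using wstar_nbhd by blast
  obtain \<mu> where mu: "\<forall>g\<in>(\<lambda>h. dual_act h e) ` F. blinfun_apply g \<mu> = blinfun_apply n g"
    using helly[of "(\<lambda>h. dual_act h e) ` F" n] F(1) by blast
  have "\<forall>h\<in>F. blinfun_apply h (e * \<mu>) = blinfun_apply n (dual_act h e)"
    using mu by simp
  then have "kappa (e * \<mu>) \<in> {m. \<forall>h\<in>F. \<bar>blinfun_apply m h - blinfun_apply (arens (kappa e) n) h\<bar> < \<epsilon>}"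
    using F(2) by simp
  then have "kappa (e * \<mu>) \<in> T" using F(3) by blast
  then show "\<exists>y. y \<in> kappa ` range ((*) e) \<and> y \<in> T" by blast
qed

theorem proposition5:
  fixes e :: "'a::{real_normed_algebra, banach}"
  assumes right_id: "\<forall>\<mu>::'a. \<mu> * e = \<mu>"
  shows "topcentre (sub_bidual e) = topcentre UNIV \<inter> sub_bidual e"
proof -
  define E where "E = sub_bidual e"
  define A where "A = kappa ` range ((*) e)"
  have E: "E = wstar closure_of A" unfolding E_def A_def sub_bidual_def ..
  have AE: "A \<subseteq> E" unfolding E
    by (rule closure_of_subset) simp
  have step1: "arens a n \<in> E" if "a \<in> A" "n \<in> E" for a n
  proof -
    obtain \<mu> where a: "a = kappa (e * \<mu>)" using \<open>a \<in> A\<close> A_def by blast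
    have c: "continuous_map wstar wstar (arens a)"
    proof (rule wstar_cont)
      fix h show "\<exists>g. \<forall>n. blinfun_apply (arens a n) h = blinfun_apply n g"
        by (rule exI[of _ "dual_act h (e * \<mu>)"]) (simp add: a)
    qed
    have "arens a ` A \<subseteq> A"
      by (auto simp: A_def a arens_kappa mult.assoc)
    then have "arens a ` E \<subseteq> wstar closure_of A"
      using continuous_map_image_closure_subset[OF c, of A] closure_of_mono[of "arens a ` A" A wstar]
      unfolding E by blast
    then show ?thesis using that E by blast
  qed
  have closed: "arens m n \<in> E" if "m \<in> E" "n \<in> E" for m n
  proof -
    have c: "continuous_map wstar wstar (\<lambda>m. arens m n)"
    proof (rule wstar_cont)
      fix h show "\<exists>g. \<forall>m. blinfun_apply (arens m n) h = blinfun_apply m g"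
        by (rule exI[of _ "bidual_act n h"]) simp
    qed
    have "(\<lambda>m. arens m n) ` A \<subseteq> E" using step1 \<open>n \<in> E\<close> by blast
    then have "(\<lambda>m. arens m n) ` E \<subseteq> wstar closure_of E"
      using continuous_map_image_closure_subset[OF c, of A] closure_of_mono[of _ E wstar]
      unfolding E by blast
    then show ?thesis using that unfolding E by (simp add: image_subset_iff)
  qed
  have Pc: "continuous_map wstar (subtopology wstar E) (\<lambda>n. arens (kappa e) n)"
  proof (rule continuous_map_into_subtopology)
    show "continuous_map wstar wstar (\<lambda>n. arens (kappa e) n)"
    proof (rule wstar_cont)
      fix h show "\<exists>g. \<forall>n. blinfun_apply (arens (kappa e) n) h = blinfun_apply n g"
        by (rule exI[of _ "dual_act h e"]) simp
    qed
    show "arens (kappa e) \<in> topspace wstar \<rightarrow> E"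
      unfolding E_def using P_in by blast
  qed
  have subU: "subtopology wstar UNIV = wstar"
    by (metis subtopology_topspace wstar_topspace)
  show ?thesis
  proof (rule set_eqI, rule iffI)
    fix m assume "m \<in> topcentre (sub_bidual e)"
    then have m: "m \<in> E" "continuous_map (subtopology wstar E) (subtopology wstar E) (arens m)"
      unfolding topcentre_def E_def by auto
    have "continuous_map wstar (subtopology wstar E) (arens m \<circ> (\<lambda>n. arens (kappa e) n))"
      using continuous_map_compose[OF Pc m(2)] .
    moreover have "arens m \<circ> (\<lambda>n. arens (kappa e) n) = arens m"
      using arens_P[OF right_id] by (auto simp: fun_eq_iff)
    ultimately have "continuous_map wstar (subtopology wstar E) (arens m)"
      by simp
    then have "continuous_map wstar wstar (arens m)"
      by (rule continuous_map_into_fulltopology)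
    then show "m \<in> topcentre UNIV \<inter> sub_bidual e"
      using m(1) unfolding topcentre_def E_def subU by auto
  next
    fix m assume "m \<in> topcentre UNIV \<inter> sub_bidual e"
    then have m: "m \<in> E" "continuous_map wstar wstar (arens m)"
      unfolding topcentre_def E_def subU by auto
    have "continuous_map (subtopology wstar E) (subtopology wstar E) (arens m)"
    proof (rule continuous_map_into_subtopology)
      show "continuous_map (subtopology wstar E) wstar (arens m)"
        by (rule continuous_map_from_subtopology[OF m(2)])
      show "arens m \<in> topspace (subtopology wstar E) \<rightarrow> E"
        using closed[OF m(1)] by auto
    qed
    then show "m \<in> topcentre (sub_bidual e)"
      using m(1) unfolding topcentre_def E_def by auto
  qed
qed

end
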